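(* Let $\mathcal{M}$ be a monotone model of dimension $n$, $\mathbf{x}\in\{0,1\}^n$ an instance and $\delta\in(0,1]$. If $\mathbf{y}\subseteq\mathbf{x}$ is a $\delta$-sufficient reason for $\mathbf{x}$ under $\mathcal{M}$ that is not minimal, then there is $i\in\{1,\dots,n\}$ with $\mathbf{y}[i]\neq\bot$ such that the partial instance $\mathbf{y}\setminus\{i\}$ (equal to $\mathbf{y}$ except that its $i$-th component is $\bot$) is also a $\delta$-sufficient reason for $\mathbf{x}$ under $\mathcal{M}$.
   Context: A model of dimension $n$ is a Boolean function $\mathcal{M}:\{0,1\}^n\to\{0,1\}$; it is monotone if $\mathbf{x}[i]\le\mathbf{z}[i]$ for all $i$ implies $\mathcal{M}(\mathbf{x})\le\mathcal{M}(\mathbf{z})$. Partial instances are $\mathbf{y}\in\{0,1,\bot\}^n$; $\mathbf{y}\subseteq\mathbf{x}$ iff $\mathbf{y}[i]=\mathbf{x}[i]$ whenever $\mathbf{y}[i]\ne\bot$; $\mathrm{Comp}(\mathbf{y})=\{\mathbf{z}\in\{0,1\}^n:\mathbf{y}\subseteq\mathbf{z}\}$; $|\mathbf{y}|_\bot$ is the number of $\bot$ entries. A $\delta$-sufficient reason for $\mathbf{x}$ under $\mathcal{M}$ is $\mathbf{y}\subseteq\mathbf{x}$ with $|\{\mathbf{z}\in\mathrm{Comp}(\mathbf{y}):\mathcal{M}(\mathbf{z})=\mathcal{M}(\mathbf{x})\}|\ge\delta2^{|\mathbf{y}|_\bot}$; it is minimal if there is no $\delta$-sufficient reason $\mathbf{y}'$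 for $\mathbf{x}$ under $\mathcal{M}$ with $\mathbf{y}'\subseteq\mathbf{y}$, $\mathbf{y}'\neq\mathbf{y}$. *)

theory Defs
  imports Complex_Main
begin

text \<open>Features are indexed by 0..n-1 (the paper's 1..n). A (total) instance of
dimension n is a function nat => bool vanishing (False) outside {0..<n};
a partial instance is a function nat => bool option with None playing the role
of bottom, equal to None outside {0..<n}.\<close>

definition inst :: "nat \<Rightarrow> (nat \<Rightarrow> bool) set" where
  "inst n = {x. \<forall>i\<ge>n. \<not> x i}"

definition partial :: "nat \<Rightarrow> (nat \<Rightarrow> bool option) set" where
  "partial n = {y. \<forall>i\<ge>n. y i = None}"

definition subsumes :: "(nat \<Rightarrow> bool option) \<Rightarrow> (nat \<Rightarrow> bool) \<Rightarrow> bool" where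
  "subsumes y x \<longleftrightarrow> (\<forall>i. y i \<noteq> None \<longrightarrow> y i = Some (x i))"

definition psubsumes :: "(nat \<Rightarrow> bool option) \<Rightarrow> (nat \<Rightarrow> bool option) \<Rightarrow> bool" where
  "psubsumes y' y \<longleftrightarrow> (\<forall>i. y' i \<noteq> None \<longrightarrow> y' i = y i)"

definition Comp :: "nat \<Rightarrow> (nat \<Rightarrow> bool option) \<Rightarrow> (nat \<Rightarrow> bool) set" where
  "Comp n y = {z \<in> inst n. subsumes y z}"

definition bot_count :: "nat \<Rightarrow> (nat \<Rightarrow> bool option) \<Rightarrow> nat" where
  "bot_count n y = card {i. i < n \<and> y i = None}"

definition monotone_model :: "nat \<Rightarrow> ((nat \<Rightarrow> bool) \<Rightarrow> bool) \<Rightarrow> bool" where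
  "monotone_model n M \<longleftrightarrow>
     (\<forall>x \<in> inst n. \<forall>z \<in> inst n. (\<forall>i<n. x i \<le> z i) \<longrightarrow> M x \<le> M z)"

definition delta_suff ::
  "nat \<Rightarrow> ((nat \<Rightarrow> bool) \<Rightarrow> bool) \<Rightarrow> real \<Rightarrow> (nat \<Rightarrow> bool) \<Rightarrow> (nat \<Rightarrow> bool option) \<Rightarrow> bool" where
  "delta_suff n M \<delta> x y \<longleftrightarrow>
     y \<in> partial n \<and> subsumes y x \<and>
     real (card {z \<in> Comp n y. M z = M x}) \<ge> \<delta> * 2 ^ bot_count n y"

definition minimal_delta_suff ::
  "nat \<Rightarrow> ((nat \<Rightarrow> bool) \<Rightarrow> bool) \<Rightarrow> real \<Rightarrow> (nat \<Rightarrow> bool) \<Rightarrow> (nat \<Rightarrow> bool option) \<Rightarrow> bool" where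
  "minimal_delta_suff n M \<delta> x y \<longleftrightarrow>
     delta_suff n M \<delta> x y \<and>
     \<not> (\<exists>y' \<in> partial n. psubsumes y' y \<and> y' \<noteq> y \<and> delta_suff n M \<delta> x y')"

end

theory Submission
  imports Defs
begin

lemma fin_fun_set:
  assumes "finite S"
  shows "finite {z::nat\<Rightarrow>bool. \<forall>j. j \<notin> S \<longrightarrow> z j = w j}
     \<and> card {z::nat\<Rightarrow>bool. \<forall>j. j \<notin> S \<longrightarrow> z j = w j} \<le> 2 ^ card S"
proof -
  let ?f = "\<lambda>A j. if j \<in> S then j \<in> A else w j"
  have sub: "{z::nat\<Rightarrow>bool. \<forall>j. j \<notin> S \<longrightarrow> z j = w j} \<subseteq> ?f ` Pow S"
  proof
    fix z :: "nat \<Rightarrow> bool" assume "z \<in> {z. \<forall>j. j \<notin> S \<longrightarrow> z j = w j}"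
    hence "z = ?f {j\<in>S. z j}" by (auto simp: fun_eq_iff)
    thus "z \<in> ?f ` Pow S" by blast
  qed
  have "finite (?f ` Pow S)" using assms by simp
  moreover have "card (?f ` Pow S) \<le> 2 ^ card S"
    using card_image_le[of "Pow S" ?f] assms by (simp add: card_Pow)
  ultimately show ?thesis using sub card_mono finite_subset by (meson order_trans)
qed

lemma mono_app:
  assumes "monotone_model n M" "a \<in> inst n" "b \<in> inst n" "\<forall>j<n. a j \<le> b j"
  shows "M a \<le> M b"
  using assms unfolding monotone_model_def by blast

lemma fin_inst: "finite (inst n)"
proof -
  have "inst n \<subseteq> {z::nat\<Rightarrow>bool. \<forall>j. j \<notin> {0..<n} \<longrightarrow> z j = (\<lambda>_. False) j}"
    by (auto simp: inst_def)
  thus ?thesis using fin_fun_set[of "{0..<n}" "\<lambda>_. False"] finite_subset by blast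
qed

lemma fin_good: "finite {z \<in> Comp n y. P z}"
  using fin_inst by (rule finite_subset[rotated]) (auto simp: Comp_def)

lemma case1:
  assumes mono: "monotone_model n M" and x: "x \<in> inst n"
    and i: "i < n" "y i = Some (x i)" "x i \<noteq> M x"
  shows "card {z \<in> Comp n (y(i:=None)). M z = M x} \<ge> 2 * card {z \<in> Comp n y. M z = M x}"
    and "bot_count n (y(i:=None)) = bot_count n y + 1"
proof -
  let ?G = "{z \<in> Comp n y. M z = M x}"
  let ?H = "{z \<in> Comp n (y(i:=None)). M z = M x}"
  let ?fl = "\<lambda>z. z(i := M x)"
  have sub: "?G \<union> ?fl ` ?G \<subseteq> ?H"
  proof
    fix w assume "w \<in> ?G \<union> ?fl ` ?G"
    then consider "w \<in> ?G" | z where "z \<in> ?G" "w = ?fl z" by blast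
    thus "w \<in> ?H"
    proof cases
      case 1 thus ?thesis by (auto simp: Comp_def subsumes_def)
    next
      case 2
      have zi: "z \<in> inst n" "subsumes y z" "M z = M x" using 2 by (auto simp: Comp_def)
      have wi: "w \<in> inst n" using zi i 2 by (auto simp: inst_def)
      have "M w = M x"
      proof (cases "M x")
        case True
        have "\<forall>j<n. z j \<le> w j" using 2 True by auto
        hence "M z \<le> M w" using mono zi(1) wi unfolding monotone_model_def by blast
        thus ?thesis using True zi by auto
      next
        case False
        have "\<forall>j<n. w j \<le> z j" using 2 False by auto
        hence "M w \<le> M z" using mono zi(1) wi unfolding monotone_model_def by blast
        thus ?thesis using False zi by auto
      qed
      thus ?thesis using wi zi 2 by (auto simp: Comp_def subsumes_def)
    qed
  qed
  have disj: "?G \<inter> ?fl ` ?G = {}"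
    using i by (auto simp: Comp_def subsumes_def)
  have inj: "inj_on ?fl ?G"
  proof (rule inj_onI)
    fix a b assume ab: "a \<in> ?G" "b \<in> ?G" "?fl a = ?fl b"
    hence ai: "a i = x i" "b i = x i" using i by (auto simp: Comp_def subsumes_def)
    show "a = b"
    proof
      fix j show "a j = b j"
        using ai fun_cong[OF ab(3), of j] by (cases "j = i") auto
    qed
  qed
  have "card (?G \<union> ?fl ` ?G) = 2 * card ?G"
    using card_Un_disjoint[OF fin_good finite_imageI[OF fin_good] disj] card_image[OF inj]
    by simp
  thus "card ?H \<ge> 2 * card ?G" using card_mono[OF fin_good sub] by simp
  have "{j. j < n \<and> (y(i:=None)) j = None} = insert i {j. j < n \<and> y j = None}"
    using i by auto
  thus "bot_count n (y(i:=None)) = bot_count n y + 1"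
    using i by (simp add: bot_count_def)
qed

lemma case2:
  assumes mono: "monotone_model n M" and x: "x \<in> inst n"
    and yy: "yy \<in> partial n" "subsumes yy x" and ps: "psubsumes y' yy"
    and S: "\<And>j. yy j \<noteq> None \<Longrightarrow> y' j = None \<Longrightarrow> x j = M x"
  defines "S \<equiv> {j. j < n \<and> yy j \<noteq> None \<and> y' j = None}"
  shows "card {z \<in> Comp n y'. M z = M x} \<le> 2 ^ card S * card {z \<in> Comp n yy. M z = M x}"
    and "bot_count n y' = bot_count n yy + card S"
proof -
  let ?G = "{z \<in> Comp n y'. M z = M x}"
  let ?H = "{z \<in> Comp n yy. M z = M x}"
  let ?g = "\<lambda>z j. if j \<in> S then x j else z j"
  have finS: "finite S" unfolding S_def by simp
  have gH: "?g z \<in> ?H" if "z \<in> ?G" for z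
  proof -
    have zi: "z \<in> inst n" "subsumes y' z" "M z = M x" using that by (auto simp: Comp_def)
    have gi: "?g z \<in> inst n" using zi x by (auto simp: inst_def S_def)
    have sg: "subsumes yy (?g z)"
      unfolding subsumes_def
    proof (intro allI impI)
      fix j assume j: "yy j \<noteq> None"
      have jn: "j < n" using yy(1) j by (cases "j < n") (auto simp: partial_def not_less)
      show "yy j = Some (?g z j)"
      proof (cases "j \<in> S")
        case True thus ?thesis using yy(2) j unfolding subsumes_def by auto
      next
        case False
        hence "y' j \<noteq> None" using j jn by (auto simp: S_def)
        thus ?thesis using False ps zi(2) unfolding psubsumes_def subsumes_def by auto
      qed
    qed
    have "M (?g z) = M x"
    proof (cases "M x")
      case True
      have "\<forall>j<n. z j \<le> ?g z j" using S True by (auto simp: S_def)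
      hence "M z \<le> M (?g z)" by (rule mono_app[OF mono zi(1) gi])
      thus ?thesis using True zi by auto
    next
      case False
      have "\<forall>j<n. ?g z j \<le> z j" using S False by (auto simp: S_def)
      hence "M (?g z) \<le> M z" by (rule mono_app[OF mono gi zi(1)])
      thus ?thesis using False zi by auto
    qed
    thus ?thesis using gi sg by (auto simp: Comp_def)
  qed
  have "?G \<subseteq> (\<Union>w\<in>?H. {z \<in> ?G. ?g z = w})"
  proof
    fix z assume z: "z \<in> ?G"
    show "z \<in> (\<Union>w\<in>?H. {z \<in> ?G. ?g z = w})"
      using z gH[OF z] by (intro UN_I[of "?g z"]) auto
  qed
  hence "card ?G \<le> card (\<Union>w\<in>?H. {z \<in> ?G. ?g z = w})"
    by (intro card_mono) (auto intro!: finite_UN_I fin_good finite_subset[OF _ fin_good[of n y' "\<lambda>z. M z = M x"]])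
  also have "\<dots> \<le> (\<Sum>w\<in>?H. card {z \<in> ?G. ?g z = w})"
    by (rule card_UN_le[OF fin_good])
  also have "\<dots> \<le> (\<Sum>w\<in>?H. 2 ^ card S)"
  proof (rule sum_mono)
    fix w assume "w \<in> ?H"
    have "{z \<in> ?G. ?g z = w} \<subseteq> {z. \<forall>j. j \<notin> S \<longrightarrow> z j = w j}" by auto
    thus "card {z \<in> ?G. ?g z = w} \<le> 2 ^ card S"
      using fin_fun_set[OF finS, of w] card_mono[of "{z. \<forall>j. j \<notin> S \<longrightarrow> z j = w j}" "{z \<in> ?G. ?g z = w}"] by linarith
  qed
  finally show "card ?G \<le> 2 ^ card S * card ?H" by (simp add: mult.commute)
  have e: "{j. j < n \<and> y' j = None} = {j. j < n \<and> yy j = None} \<union> S"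
    using ps unfolding S_def psubsumes_def by auto
  have "{j. j < n \<and> yy j = None} \<inter> S = {}" unfolding S_def by auto
  thus "bot_count n y' = bot_count n yy + card S"
    unfolding bot_count_def e by (subst card_Un_disjoint) (auto simp: S_def)
qed

theorem lemma1:
  fixes n :: nat and M :: "(nat \<Rightarrow> bool) \<Rightarrow> bool" and x :: "nat \<Rightarrow> bool"
    and y :: "nat \<Rightarrow> bool option" and \<delta> :: real
  assumes "monotone_model n M"
    and "x \<in> inst n"
    and "0 < \<delta>" and "\<delta> \<le> 1"
    and "delta_suff n M \<delta> x y"
    and "\<not> minimal_delta_suff n M \<delta> x y"
  shows "\<exists>i<n. y i \<noteq> None \<and> delta_suff n M \<delta> x (y(i := None))"
proof -
  have ds: "y \<in> partial n" "subsumes y x"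
    "real (card {z \<in> Comp n y. M z = M x}) \<ge> \<delta> * 2 ^ bot_count n y"
    using assms(5) by (auto simp: delta_suff_def)
  obtain y' where y': "y' \<in> partial n" "psubsumes y' y" "y' \<noteq> y" "delta_suff n M \<delta> x y'"
    using assms(5,6) by (auto simp: minimal_delta_suff_def)
  have part: "\<And>i. y(i:=None) \<in> partial n" "\<And>i. subsumes (y(i:=None)) x"
    using ds by (auto simp: partial_def subsumes_def)
  have yn: "y j \<noteq> None \<Longrightarrow> j < n" for j using ds(1) by (cases "j < n") (auto simp: partial_def not_less)
  show ?thesis
  proof (cases "\<exists>i<n. y i \<noteq> None \<and> y' i = None \<and> x i \<noteq> M x")
    case True
    then obtain i where i: "i < n" "y i \<noteq> None" "x i \<noteq> M x" by blast
    have yi: "y i = Some (x i)" using ds(2) i unfolding subsumes_def by auto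
    note c = case1[where n=n and M=M and x=x and i=i and y=y, OF assms(1,2) i(1) yi i(3)]
    have "\<delta> * 2 ^ bot_count n (y(i:=None)) = 2 * (\<delta> * 2 ^ bot_count n y)"
      using c(2) by simp
    also have "\<dots> \<le> 2 * real (card {z \<in> Comp n y. M z = M x})" using ds(3) by simp
    also have "\<dots> \<le> real (card {z \<in> Comp n (y(i:=None)). M z = M x})"
      using c(1) by linarith
    finally show ?thesis using i part by (auto simp: delta_suff_def)
  next
    case False
    obtain i where i: "y i \<noteq> y' i" using y'(3) by (metis ext)
    have iN1: "y' i = None" using i y'(2) unfolding psubsumes_def by auto
    have iN2: "y i \<noteq> None" using i iN1 by auto
    note iN = iN1 iN2
    have "i < n" using yn iN by blast
    let ?yy = "y(i:=None)"
    have ps: "psubsumes y' ?yy" using y'(2) iN unfolding psubsumes_def by auto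
    have Sx: "\<And>j. ?yy j \<noteq> None \<Longrightarrow> y' j = None \<Longrightarrow> x j = M x"
      using False yn by (metis fun_upd_apply)
    define S where "S = {j. j < n \<and> ?yy j \<noteq> None \<and> y' j = None}"
    have c1: "card {z \<in> Comp n y'. M z = M x} \<le> 2 ^ card S * card {z \<in> Comp n ?yy. M z = M x}"
      unfolding S_def by (rule case2(1)[OF assms(1,2) part(1) part(2) ps]) (rule Sx)
    have c2: "bot_count n y' = bot_count n ?yy + card S"
      unfolding S_def by (rule case2(2)[OF assms(1,2) part(1) part(2) ps]) (rule Sx)
    note c = c1 c2
    have y'd: "\<delta> * 2 ^ bot_count n y' \<le> real (card {z \<in> Comp n y'. M z = M x})"
      using y'(4) by (auto simp: delta_suff_def)
    have "(2::real) ^ card S * (\<delta> * 2 ^ bot_count n ?yy) = \<delta> * 2 ^ bot_count n y'"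
      using c(2) by (simp add: power_add)
    also have "\<dots> \<le> real (card {z \<in> Comp n y'. M z = M x})" by (rule y'd)
    also have "\<dots> \<le> 2 ^ card S * real (card {z \<in> Comp n ?yy. M z = M x})"
    proof -
      have "real (card {z \<in> Comp n y'. M z = M x}) \<le> real (2 ^ card S * card {z \<in> Comp n ?yy. M z = M x})"
        using c(1) by (simp only: of_nat_le_iff)
      thus ?thesis by simp
    qed
    finally have "\<delta> * 2 ^ bot_count n ?yy \<le> real (card {z \<in> Comp n ?yy. M z = M x})"
      by (rule mult_left_le_imp_le) simp
    thus ?thesis using \<open>i < n\<close> iN part by (auto simp: delta_suff_def)
  qed
qed

end
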